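(* Let ${\mathcal A}^0$ be a central generic arrangement of $n$ hyperplanes in $\mathbb{C}^k$ and let $\mathbb{T}=\{L_1,\dots,L_r\}$ be an $r$-set with $\bigcup_{i=1}^r L_i=[n]$. Let ${\mathcal A}^{t_1},\dots,{\mathcal A}^{t_d}$ be $K_{\mathbb{T}}$-translated arrangements of ${\mathcal A}^0$ and fix $i_0\in[r]$. Then $t_1,\dots,t_d$ are linearly independent in the quotient space $\mathbb{C}^n/C$, where $C=\{t\in\mathbb{C}^n\mid {\mathcal A}^t\text{ is a central arrangement}\}$, if and only if the associated $K_{\mathbb{T}}$-vector sets $\{v^{t_h}_{i_0,j}\}_{j\neq i_0}$, $h=1,\dots,d$, are weakly linearly independent.
   Context: A central arrangement ${\mathcal A}^0=\{H_1^0,\dots,H_n^0\}$ of linear hyperplanes in $\mathbb{C}^k$ ($k<n$) is called central generic if any $m\le k$ of its hyperplanes intersect in codimension $m$. Let $\alpha_i$ be a normal vector of $H_i^0$. For $t=(x_1,\dots,x_n)\in\mathbb{C}^n$, the translate ${\mathcal A}^t=\{H_1^{x_1},\dots,H_n^{x_n}\}$ has $H_i^{x_i}=H_i^0+\alpha_i x_i$; a translate is central if all its hyperplanes share a common point. An $r$-set is a set $\mathbb{T}=\{L_1,\dots,L_r\}$ of subsets $L_i\subset[n]=\{1,\dots,n\}$, $|L_i|=k+1$, such that $\bigcup_{i=1}^r L_i=\bigcup_{i\in I}L_i$ for every $I\subset[r]$ with $|I|=r-1$, and $L_i\cap L_j\neq\emptyset$ for all $i\ne j$. A translate ${\mathcal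 A}^t$ is $K_{\mathbb{T}}$-translated if for every $L_i\in\mathbb{T}$ the set $P_i^t=\bigcap_{p\in L_i}H_p^{x_p}$ is nonempty (hence a point) and is the intersection of exactly the $k+1$ hyperplanes indexed by $L_i$. For such ${\mathcal A}^t$ and fixed $i_0\in[r]$, its $K_{\mathbb{T}}$-vector set is the family $\{v^t_{i_0,j}\}_{j\in[r],j\neq i_0}$ of vectors in $\mathbb{C}^k$ with $P^t_{i_0}+v^t_{i_0,j}=P^t_j$. $K_{\mathbb{T}}$-vector sets $\{v^{t_h}_{i_0,j}\}_{j\ne i_0}$, $h=1,\dots,d$, are weakly linearly independent if $\sum_{h=1}^d a_h v^{t_h}_{i_0,j}=0$ for all $j\ne i_0$ (with $a_h\in\mathbb{C}$) implies $a_1=\dots=a_d=0$. *)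

theory Defs
  imports "HOL-Analysis.Analysis"
begin

text \<open>Hyperplanes in C^k are modelled in complex^'k (k = CARD('k)); the n hyperplanes
  of the arrangement are indexed by the finite type 'n (n = CARD('n), [n] = UNIV).
  alpha i is the normal vector of H_i^0 (Hermitian orthogonal complement).\<close>

definition cinner_vec :: "complex^'k \<Rightarrow> complex^'k \<Rightarrow> complex" where
  "cinner_vec p q = (\<Sum>j\<in>UNIV. p $ j * cnj (q $ j))"

definition hyp0 :: "('n \<Rightarrow> complex^'k) \<Rightarrow> 'n \<Rightarrow> (complex^'k) set" where
  "hyp0 \<alpha> i = {p. cinner_vec p (\<alpha> i) = 0}"

definition hypt :: "('n \<Rightarrow> complex^'k) \<Rightarrow> 'n \<Rightarrow> complex \<Rightarrow> (complex^'k) set" where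
  "hypt \<alpha> i x = (\<lambda>h. h + x *s \<alpha> i) ` hyp0 \<alpha> i"

definition central_generic :: "('n \<Rightarrow> complex^'k) \<Rightarrow> bool" where
  "central_generic \<alpha> \<longleftrightarrow> CARD('k) < CARD('n) \<and>
     (\<forall>S::'n set. card S \<le> CARD('k) \<longrightarrow>
        CARD('k) - vec.dim (\<Inter>i\<in>S. hyp0 \<alpha> i) = card S)"

definition central_translate :: "('n \<Rightarrow> complex^'k) \<Rightarrow> complex^'n \<Rightarrow> bool" where
  "central_translate \<alpha> t \<longleftrightarrow> (\<Inter>i\<in>UNIV. hypt \<alpha> i (t $ i)) \<noteq> {}"

definition central_set :: "('n \<Rightarrow> complex^'k) \<Rightarrow> (complex^'n) set" where
  "central_set \<alpha> = {t. central_translate \<alpha> t}"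

text \<open>r-set T = {L_1,...,L_r}, given as L indexed by [r] = {1..r}.\<close>
definition r_set :: "nat \<Rightarrow> (nat \<Rightarrow> 'n set) \<Rightarrow> nat \<Rightarrow> bool" where
  "r_set k L r \<longleftrightarrow> inj_on L {1..r} \<and>
     (\<forall>i\<in>{1..r}. card (L i) = k + 1) \<and>
     (\<forall>I\<subseteq>{1..r}. card I = r - 1 \<longrightarrow> (\<Union>i\<in>I. L i) = (\<Union>i\<in>{1..r}. L i)) \<and>
     (\<forall>i\<in>{1..r}. \<forall>j\<in>{1..r}. i \<noteq> j \<longrightarrow> L i \<inter> L j \<noteq> {})"

definition Pset :: "('n \<Rightarrow> complex^'k) \<Rightarrow> complex^'n \<Rightarrow> 'n set \<Rightarrow> (complex^'k) set" where
  "Pset \<alpha> t Li = (\<Inter>p\<in>Li. hypt \<alpha> p (t $ p))"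

definition KT_translated :: "('n \<Rightarrow> complex^'k) \<Rightarrow> (nat \<Rightarrow> 'n set) \<Rightarrow> nat \<Rightarrow> complex^'n \<Rightarrow> bool" where
  "KT_translated \<alpha> L r t \<longleftrightarrow> (\<forall>i\<in>{1..r}.
      (\<exists>P. Pset \<alpha> t (L i) = {P}) \<and>
      (\<forall>q. q \<notin> L i \<longrightarrow> Pset \<alpha> t (L i) \<inter> hypt \<alpha> q (t $ q) = {}))"

definition Ppoint :: "('n \<Rightarrow> complex^'k) \<Rightarrow> complex^'n \<Rightarrow> 'n set \<Rightarrow> complex^'k" where
  "Ppoint \<alpha> t Li = (THE P. P \<in> Pset \<alpha> t Li)"

definition KT_vec :: "('n \<Rightarrow> complex^'k) \<Rightarrow> (nat \<Rightarrow> 'n set) \<Rightarrow> complex^'n \<Rightarrow> nat \<Rightarrow> nat \<Rightarrow> complex^'k" where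
  "KT_vec \<alpha> L t i0 j = Ppoint \<alpha> t (L j) - Ppoint \<alpha> t (L i0)"

definition weakly_lin_indep ::
  "('n \<Rightarrow> complex^'k) \<Rightarrow> (nat \<Rightarrow> 'n set) \<Rightarrow> nat \<Rightarrow> nat \<Rightarrow> (nat \<Rightarrow> complex^'n) \<Rightarrow> nat \<Rightarrow> bool" where
  "weakly_lin_indep \<alpha> L r i0 ts d \<longleftrightarrow>
     (\<forall>a::nat \<Rightarrow> complex.
        (\<forall>j\<in>{1..r}. j \<noteq> i0 \<longrightarrow> (\<Sum>h\<in>{1..d}. a h *s KT_vec \<alpha> L (ts h) i0 j) = 0)
        \<longrightarrow> (\<forall>h\<in>{1..d}. a h = 0))"

text \<open>Linear independence of the classes of ts 1, ..., ts d in the quotient C^n / S,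
  S a subspace: a nontrivial combination never lies in S.\<close>
definition lin_indep_mod :: "(complex^'n) set \<Rightarrow> (nat \<Rightarrow> complex^'n) \<Rightarrow> nat \<Rightarrow> bool" where
  "lin_indep_mod S ts d \<longleftrightarrow>
     (\<forall>a::nat \<Rightarrow> complex. (\<Sum>h\<in>{1..d}. a h *s ts h) \<in> S \<longrightarrow> (\<forall>h\<in>{1..d}. a h = 0))"

end

theory Submission
  imports Defs
begin

lemma cinner_add: "cinner_vec (p + q) a = cinner_vec p a + cinner_vec q a"
  unfolding cinner_vec_def by (simp add: distrib_right sum.distrib)

lemma cinner_scale: "cinner_vec (c *s p) a = c * cinner_vec p a"
  unfolding cinner_vec_def by (simp add: sum_distrib_left mult.assoc)

lemma cinner_diff: "cinner_vec (p - q) a = cinner_vec p a - cinner_vec q a"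
  unfolding cinner_vec_def by (simp add: left_diff_distrib sum_subtractf)

lemma cinner_sum: "cinner_vec (sum f H) a = (\<Sum>h\<in>H. cinner_vec (f h) a)"
  unfolding cinner_vec_def by (simp add: sum_distrib_right sum.swap[of _ UNIV H])

lemma mem_hypt: "p \<in> hypt \<alpha> i x \<longleftrightarrow> cinner_vec p (\<alpha> i) = x * cinner_vec (\<alpha> i) (\<alpha> i)"
proof
  assume "p \<in> hypt \<alpha> i x"
  then obtain h where "h \<in> hyp0 \<alpha> i" "p = h + x *s \<alpha> i" unfolding hypt_def by auto
  then show "cinner_vec p (\<alpha> i) = x * cinner_vec (\<alpha> i) (\<alpha> i)"
    by (simp add: hyp0_def cinner_add cinner_scale)
next
  assume a: "cinner_vec p (\<alpha> i) = x * cinner_vec (\<alpha> i) (\<alpha> i)"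
  have "p - x *s \<alpha> i \<in> hyp0 \<alpha> i" using a by (simp add: hyp0_def cinner_diff cinner_scale)
  moreover have "p = (p - x *s \<alpha> i) + x *s \<alpha> i" by simp
  ultimately show "p \<in> hypt \<alpha> i x" unfolding hypt_def by blast
qed

lemma uniq:
  fixes \<alpha> :: "'n::finite \<Rightarrow> complex^'k::finite"
  assumes cg: "central_generic \<alpha>" and c: "card Li \<ge> CARD('k)"
    and u: "\<forall>q\<in>Li. cinner_vec u (\<alpha> q) = 0"
  shows "u = 0"
proof -
  obtain S where S: "S \<subseteq> Li" "card S = CARD('k)"
    using c by (meson obtain_subset_with_card_n)
  have "CARD('k) - vec.dim (\<Inter>i\<in>S. hyp0 \<alpha> i) = card S"
    using cg S unfolding central_generic_def by auto
  hence "vec.dim (\<Inter>i\<in>S. hyp0 \<alpha> i) = 0" using S(2) by (metis zero_less_card_finite diff_less less_irrefl neq0_conv)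
  hence "(\<Inter>i\<in>S. hyp0 \<alpha> i) \<subseteq> {0}" using vec.dim_eq_0 by blast
  moreover have "u \<in> (\<Inter>i\<in>S. hyp0 \<alpha> i)" using u S(1) by (auto simp: hyp0_def)
  ultimately show ?thesis by blast
qed

lemma Ppoint_eq:
  assumes "KT_translated \<alpha> L r t" "i \<in> {1..r}" "q \<in> L i"
  shows "cinner_vec (Ppoint \<alpha> t (L i)) (\<alpha> q) = t $ q * cinner_vec (\<alpha> q) (\<alpha> q)"
proof -
  have "\<exists>P. Pset \<alpha> t (L i) = {P}" using assms(1,2) unfolding KT_translated_def by blast
  then obtain P where P: "Pset \<alpha> t (L i) = {P}" by blast
  have "Ppoint \<alpha> t (L i) = P" unfolding Ppoint_def P by simp
  moreover have "P \<in> hypt \<alpha> q (t $ q)" using P assms(3) unfolding Pset_def by auto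
  ultimately show ?thesis by (simp add: mem_hypt)
qed

theorem lemma3p1:
  fixes \<alpha> :: "'n::finite \<Rightarrow> complex^'k::finite"
    and L :: "nat \<Rightarrow> 'n set" and r :: nat
    and ts :: "nat \<Rightarrow> complex^'n" and d :: nat and i0 :: nat
  assumes "central_generic \<alpha>"
    and "r_set CARD('k) L r"
    and "(\<Union>i\<in>{1..r}. L i) = UNIV"
    and "\<forall>h\<in>{1..d}. KT_translated \<alpha> L r (ts h)"
    and "i0 \<in> {1..r}"
  shows "lin_indep_mod (central_set \<alpha>) ts d \<longleftrightarrow> weakly_lin_indep \<alpha> L r i0 ts d"
proof -
  define c where "c q = cinner_vec (\<alpha> q) (\<alpha> q)" for q
  have cardL: "card (L i) \<ge> CARD('k)" if "i \<in> {1..r}" for i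
    using assms(2) that unfolding r_set_def by auto
  have W: "cinner_vec (\<Sum>h\<in>{1..d}. a h *s Ppoint \<alpha> (ts h) (L i)) (\<alpha> q)
      = (\<Sum>h\<in>{1..d}. a h *s ts h) $ q * c q" if "i \<in> {1..r}" "q \<in> L i" for a i q
  proof -
    have "cinner_vec (\<Sum>h\<in>{1..d}. a h *s Ppoint \<alpha> (ts h) (L i)) (\<alpha> q)
       = (\<Sum>h\<in>{1..d}. a h * (ts h $ q * c q))"
      unfolding cinner_sum cinner_scale
      apply (rule sum.cong, simp)
      using Ppoint_eq[of \<alpha> L r _ i q] assms(4) that c_def by simp
    then show ?thesis by (simp add: sum_distrib_right mult.assoc)
  qed
  have KV: "(\<Sum>h\<in>{1..d}. a h *s KT_vec \<alpha> L (ts h) i0 j)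
     = (\<Sum>h\<in>{1..d}. a h *s Ppoint \<alpha> (ts h) (L j)) - (\<Sum>h\<in>{1..d}. a h *s Ppoint \<alpha> (ts h) (L i0))"
    for a j
    by (simp add: KT_vec_def vector_ssub_ldistrib sum_subtractf)
  have cen: "s \<in> central_set \<alpha> \<longleftrightarrow> (\<exists>p. \<forall>q. cinner_vec p (\<alpha> q) = s $ q * c q)" for s
  proof -
    have "s \<in> central_set \<alpha> \<longleftrightarrow> (\<exists>p. \<forall>q. p \<in> hypt \<alpha> q (s $ q))"
      unfolding central_set_def central_translate_def by blast
    then show ?thesis by (simp add: mem_hypt c_def)
  qed
  show ?thesis
  proof
    assume li: "lin_indep_mod (central_set \<alpha>) ts d"
    show "weakly_lin_indep \<alpha> L r i0 ts d"
      unfolding weakly_lin_indep_def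
    proof (intro allI impI)
      fix a assume h: "\<forall>j\<in>{1..r}. j \<noteq> i0 \<longrightarrow> (\<Sum>h\<in>{1..d}. a h *s KT_vec \<alpha> L (ts h) i0 j) = 0"
      define p where "p = (\<Sum>h\<in>{1..d}. a h *s Ppoint \<alpha> (ts h) (L i0))"
      have "\<forall>q. cinner_vec p (\<alpha> q) = (\<Sum>h\<in>{1..d}. a h *s ts h) $ q * c q"
      proof
        fix q
        obtain j where j: "j \<in> {1..r}" "q \<in> L j" using assms(3) by blast
        have "(\<Sum>h\<in>{1..d}. a h *s Ppoint \<alpha> (ts h) (L j)) = p"
        proof (cases "j = i0")
          case True then show ?thesis by (simp add: p_def)
        next
          case False then show ?thesis using h j KV[of a j] by (simp add: p_def)
        qed
        then show "cinner_vec p (\<alpha> q) = (\<Sum>h\<in>{1..d}. a h *s ts h) $ q * c q"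
          using W[OF j] by metis
      qed
      hence "(\<Sum>h\<in>{1..d}. a h *s ts h) \<in> central_set \<alpha>" using cen by blast
      then show "\<forall>h\<in>{1..d}. a h = 0" using li unfolding lin_indep_mod_def by blast
    qed
  next
    assume wi: "weakly_lin_indep \<alpha> L r i0 ts d"
    show "lin_indep_mod (central_set \<alpha>) ts d"
      unfolding lin_indep_mod_def
    proof (intro allI impI)
      fix a assume "(\<Sum>h\<in>{1..d}. a h *s ts h) \<in> central_set \<alpha>"
      then obtain p where p: "\<forall>q. cinner_vec p (\<alpha> q) = (\<Sum>h\<in>{1..d}. a h *s ts h) $ q * c q"
        using cen by blast
      have eqp: "(\<Sum>h\<in>{1..d}. a h *s Ppoint \<alpha> (ts h) (L i)) = p" if i: "i \<in> {1..r}" for i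
      proof -
        have "(\<Sum>h\<in>{1..d}. a h *s Ppoint \<alpha> (ts h) (L i)) - p = 0"
          apply (rule uniq[OF assms(1) cardL[OF i]])
          using W[OF i] p by (simp add: cinner_diff)
        then show ?thesis by simp
      qed
      have "\<forall>j\<in>{1..r}. j \<noteq> i0 \<longrightarrow> (\<Sum>h\<in>{1..d}. a h *s KT_vec \<alpha> L (ts h) i0 j) = 0"
        using KV eqp assms(5) by simp
      then show "\<forall>h\<in>{1..d}. a h = 0" using wi unfolding weakly_lin_indep_def by blast
    qed
  qed
qed

end
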